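(* Let $(X,d)$ be a separable metric space admitting a weak convergence, and let $p\ge 1$. If $\{\mu_n\}_{n\in\mathbb{N}}$ and $\mu$ in $\mathcal{P}_{p-1}(X)$ satisfy $\mu_n\to\mu$ in $\tau_{\mathrm{w}}^{p-1}$, then $$\max_{x_n\in M_p(\mu_n)}\min_{x\in M_p(\mu)} d(x_n,x)\to 0$$ as $n\to\infty$.
   Context: A convergence $c$ on a set $X$ is a rule assigning at most one point of $X$ as the "limit" of each sequence in $X$, such that whenever a sequence has limit $x$, every subsequence also has limit $x$. A convergence $w$ on $X$ is a weak convergence for $(X,d)$ if: (W1) whenever $\sup_n d(x_n,y)<\infty$ for some $y$, some subsequence converges in $w$ to some point of $X$; (W2) whenever $x_n\to x$ in $w$, $d(x,y)\le\liminf_n d(x_n,y)$ for all $y\in X$; (W3) whenever $x_n\to x$ in $w$ and $d(x_n,y)\to d(x,y)$ for some $y\in X$, then $d(x_n,x)\to0$. $(X,d)$ admits a weak convergence if such a $w$ exists. For $r\ge 0$, $\mathcal{P}_r(X)$ is the set of Borel probability measures $\mu$ on $(X,d)$ with $\int_X d^r(x,y)\,d\mu(y)<\infty$ for some (equivalently all) $x\in X$; $\mu_n\to\mu$ in $\tau_{\mathrm{w}}^{r}$ means $\int f\,d\mu_n\to\int f\,d\mu$ for every bounded continuous $f:(X,d)\to\mathbb{R}$ and $\int d^r(x,y)\,d\mu_n(y)\to\int d^r(x,y)\,d\mu(y)$ for all $x\in X$. For $\mu\in\mathcal{P}_{p-1}(X)$, $W_p(\mu,x,x'):=\int_X (d^p(x,y)-d^p(x',y))\,d\mu(y)$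 and $M_p(\mu):=\{x\in X: W_p(\mu,x,x')\le 0 \text{ for all } x'\in X\}$. *)

theory Defs
  imports "HOL-Probability.Probability"
begin

definition is_convergence :: "((nat \<Rightarrow> 'a) \<Rightarrow> 'a \<Rightarrow> bool) \<Rightarrow> bool" where
  "is_convergence c \<longleftrightarrow>
     (\<forall>s x y. c s x \<and> c s y \<longrightarrow> x = y) \<and>
     (\<forall>s x (r::nat \<Rightarrow> nat). c s x \<and> strict_mono r \<longrightarrow> c (s \<circ> r) x)"

text \<open>Weak convergence for the metric space (type with dist), conditions (W1)-(W3).\<close>
definition weak_conv :: "((nat \<Rightarrow> 'a::metric_space) \<Rightarrow> 'a \<Rightarrow> bool) \<Rightarrow> bool" where
  "weak_conv c \<longleftrightarrow> is_convergence c \<and>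
     (\<forall>s. (\<exists>y B. \<forall>n. dist (s n) y \<le> B) \<longrightarrow> (\<exists>(r::nat \<Rightarrow> nat) x. strict_mono r \<and> c (s \<circ> r) x)) \<and>
     (\<forall>s x y. c s x \<longrightarrow> ereal (dist x y) \<le> liminf (\<lambda>n. ereal (dist (s n) y))) \<and>
     (\<forall>s x y. c s x \<and> ((\<lambda>n. dist (s n) y) \<longlonglongrightarrow> dist x y) \<longrightarrow> ((\<lambda>n. dist (s n) x) \<longlonglongrightarrow> 0))"

definition admits_weak_convergence :: "'a::metric_space itself \<Rightarrow> bool" where
  "admits_weak_convergence _ \<longleftrightarrow> (\<exists>c::(nat \<Rightarrow> 'a) \<Rightarrow> 'a \<Rightarrow> bool. weak_conv c)"

definition separable_metric :: "'a::metric_space itself \<Rightarrow> bool" where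
  "separable_metric _ \<longleftrightarrow> (\<exists>C::'a set. countable C \<and> closure C = UNIV)"

text \<open>Power of a distance with the convention t^0 = 1 (also for t = 0).\<close>
definition dpow :: "real \<Rightarrow> real \<Rightarrow> real" where
  "dpow t r = (if r = 0 then 1 else t powr r)"

definition borel_prob :: "'a::metric_space measure \<Rightarrow> bool" where
  "borel_prob \<mu> \<longleftrightarrow> prob_space \<mu> \<and> sets \<mu> = sets borel"

definition Pr :: "real \<Rightarrow> 'a::metric_space measure set" where
  "Pr r = {\<mu>. borel_prob \<mu> \<and> (\<exists>x. integrable \<mu> (\<lambda>y. dpow (dist x y) r))}"

definition conv_tw :: "real \<Rightarrow> (nat \<Rightarrow> 'a::metric_space measure) \<Rightarrow> 'a measure \<Rightarrow> bool" where
  "conv_tw r \<mu>s \<mu> \<longleftrightarrow>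
     (\<forall>f::'a \<Rightarrow> real. continuous_on UNIV f \<and> bounded (range f) \<longrightarrow>
        ((\<lambda>n. integral\<^sup>L (\<mu>s n) f) \<longlonglongrightarrow> integral\<^sup>L \<mu> f)) \<and>
     (\<forall>x. (\<lambda>n. integral\<^sup>L (\<mu>s n) (\<lambda>y. dpow (dist x y) r))
            \<longlonglongrightarrow> integral\<^sup>L \<mu> (\<lambda>y. dpow (dist x y) r))"

definition Wp :: "real \<Rightarrow> 'a::metric_space measure \<Rightarrow> 'a \<Rightarrow> 'a \<Rightarrow> real" where
  "Wp p \<mu> x x' = integral\<^sup>L \<mu> (\<lambda>y. dpow (dist x y) p - dpow (dist x' y) p)"

definition Mp :: "real \<Rightarrow> 'a::metric_space measure \<Rightarrow> 'a set" where
  "Mp p \<mu> = {x. \<forall>x'. Wp p \<mu> x x' \<le> 0}"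

end

theory Submission
  imports Defs
begin

lemma dpow_nonneg: "0 \<le> dpow t r"
  by (simp add: dpow_def)

lemma dpow_mono: "0 \<le> s \<Longrightarrow> s \<le> t \<Longrightarrow> 0 \<le> r \<Longrightarrow> dpow s r \<le> dpow t r"
  by (simp add: dpow_def powr_mono2)

lemma dpow_mult: "0 \<le> s \<Longrightarrow> 0 < c \<Longrightarrow> dpow (c * s) r = c powr r * dpow s r"
  by (simp add: dpow_def powr_mult)

lemma dpow_ge1: "1 \<le> t \<Longrightarrow> 0 \<le> r \<Longrightarrow> 1 \<le> dpow t r"
  by (simp add: dpow_def ge_one_powr_ge_zero)

lemma dpow_max: "dpow (max s t) r \<le> dpow s r + dpow t r"
  by (cases "s \<le> t") (auto simp: dpow_def max_def)

lemma dpow_add: 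
  assumes "0 \<le> s" "0 \<le> t" "0 \<le> r"
  shows "dpow (s + t) r \<le> 2 powr r * (dpow s r + dpow t r)"
proof -
  have "dpow (s + t) r \<le> dpow (2 * max s t) r"
    using assms by (intro dpow_mono) auto
  also have "\<dots> = 2 powr r * dpow (max s t) r"
    using assms by (intro dpow_mult) auto
  also have "\<dots> \<le> 2 powr r * (dpow s r + dpow t r)"
    by (intro mult_left_mono dpow_max) auto
  finally show ?thesis .
qed

lemma pow_diff_aux:
  fixes s t p :: real
  assumes "0 \<le> t" "t \<le> s" "1 \<le> p"
  shows "s powr p - t powr p \<le> p * (s - t) * dpow s (p - 1)"
proof (cases "s = 0")
  case True then show ?thesis using assms by simp
next
  case False
  then have s: "s > 0" using assms by simp
  have ss: "s * s powr (p - 1) = s powr p"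
    using s by (simp add: powr_mult_base)
  show ?thesis
  proof (cases "p = 1")
    case True then show ?thesis using assms by (simp add: dpow_def)
  next
    case False
    then have p1: "p > 1" using assms by simp
    define q where "q = p - 1"
    have q: "q > 0" using p1 q_def by simp
    have Y: "t * s powr q \<le> t powr p / p + (s powr q) powr (p / q) / (p / q)"
      using q p1 assms by (intro Youngs_inequality) (auto simp: q_def field_simps)
    have "(s powr q) powr (p / q) = s powr p" using q by (simp add: powr_powr)
    with Y have "p * (t * s powr q) \<le> t powr p + q * s powr p"
      using p1 q by (simp add: field_simps)
    then show ?thesis
      using ss p1 by (simp add: dpow_def q_def algebra_simps)
  qed
qed

lemma pow_diff:
  fixes s t p :: real
  assumes "0 \<le> t" "0 \<le> s" "1 \<le> p"
  shows "\<bar>s powr p - t powr p\<bar> \<le> p * \<bar>s - t\<bar> * dpow (max s t) (p - 1)"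
proof (cases "t \<le> s")
  case True
  have "t powr p \<le> s powr p" using True assms by (intro powr_mono2) auto
  then show ?thesis using pow_diff_aux[OF assms(1) True assms(3)] True by (simp add: max_def)
next
  case False
  have "s powr p \<le> t powr p" using False assms by (intro powr_mono2) auto
  then show ?thesis using pow_diff_aux[OF assms(2) _ assms(3), of t] False by (simp add: max_def)
qed

lemma cont_dpow:
  fixes g :: "'a::metric_space \<Rightarrow> real"
  assumes "continuous_on UNIV g" "\<And>z. 0 \<le> g z" "0 \<le> r"
  shows "continuous_on UNIV (\<lambda>z. dpow (g z) r)"
proof (cases "r = 0")
  case True then show ?thesis by (simp add: dpow_def)
next
  case False
  have "isCont (\<lambda>z. g z powr r) z" for z
  proof -
    have gz: "(g \<longlongrightarrow> g z) (at z)" using assms(1) by (simp add: continuous_on_eq_continuous_at isContD)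
    show ?thesis unfolding isCont_def
      by (rule tendsto_powr'[OF gz tendsto_const]) (use False assms in auto)
  qed
  then show ?thesis using False by (simp add: dpow_def continuous_on_eq_continuous_at)
qed

lemma cont_dpow_dist: "0 \<le> r \<Longrightarrow> continuous_on UNIV (\<lambda>z. dpow (dist x z) r)"
  by (rule cont_dpow) (auto intro: continuous_intros)

lemma bp_meas:
  assumes "borel_prob \<nu>" "continuous_on UNIV f"
  shows "f \<in> borel_measurable \<nu>"
proof -
  have "sets \<nu> = sets borel" using assms by (simp add: borel_prob_def)
  then have e: "borel_measurable \<nu> = borel_measurable borel"
    by (intro measurable_cong_sets) auto
  show ?thesis unfolding e by (rule borel_measurable_continuous_onI[OF assms(2)])
qed

lemma integrable_by:
  fixes f :: "'a::metric_space \<Rightarrow> real"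
  assumes "borel_prob \<nu>" "continuous_on UNIV f" "integrable \<nu> w" "\<And>z. \<bar>f z\<bar> \<le> w z"
  shows "integrable \<nu> f"
proof (rule Bochner_Integration.integrable_bound[OF assms(3) bp_meas[OF assms(1,2)]], rule AE_I2)
  fix z
  have "\<bar>f z\<bar> \<le> w z" by (rule assms(4))
  then show "norm (f z) \<le> norm (w z)" by simp
qed

lemma bp_prob: "borel_prob \<nu> \<Longrightarrow> prob_space \<nu>"
  by (simp add: borel_prob_def)

lemma Pr_int:
  assumes "\<nu> \<in> Pr q" "0 \<le> q"
  shows "integrable \<nu> (\<lambda>z. dpow (dist x z) q)"
proof -
  obtain x0 where bp: "borel_prob \<nu>" and i0: "integrable \<nu> (\<lambda>z. dpow (dist x0 z) q)"
    using assms by (auto simp: Pr_def)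
  interpret prob_space \<nu> using bp by (simp add: borel_prob_def)
  have "integrable \<nu> (\<lambda>z. 2 powr q * (dpow (dist x0 z) q + dpow (dist x x0) q))"
    using i0 by auto
  moreover have "\<bar>dpow (dist x z) q\<bar> \<le> 2 powr q * (dpow (dist x0 z) q + dpow (dist x x0) q)" for z
  proof -
    have "dpow (dist x z) q \<le> dpow (dist x0 z + dist x x0) q"
      using assms dist_triangle3[of x z x0] by (intro dpow_mono) (auto simp: dist_commute)
    also have "\<dots> \<le> 2 powr q * (dpow (dist x0 z) q + dpow (dist x x0) q)"
      using assms by (intro dpow_add) auto
    finally show ?thesis by (simp add: dpow_nonneg)
  qed
  ultimately show ?thesis
    by (intro integrable_by[OF bp cont_dpow_dist[OF assms(2)]])
qed

lemma Pr_intH: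
  assumes "\<nu> \<in> Pr q" "0 \<le> q"
  shows "integrable \<nu> (\<lambda>z. 1 + dpow (dist x z) q)"
proof -
  have "borel_prob \<nu>" using assms by (simp add: Pr_def)
  then interpret prob_space \<nu> by (simp add: borel_prob_def)
  show ?thesis using Pr_int[OF assms] by auto
qed

lemma clamp_bound:
  fixes a h c m :: real
  assumes "\<bar>a\<bar> \<le> c * h" "0 < c" "0 \<le> m"
  shows "\<bar>a - max (- (c * m)) (min (c * m) a)\<bar> \<le> c * (h - min h m)"
proof -
  have cm: "0 \<le> c * m" using assms by simp
  have ch: "0 \<le> c * h" using assms(1) abs_ge_zero[of a] by linarith
  then have h0: "0 \<le> h" using assms(2) by (simp add: zero_le_mult_iff)
  consider "a > c * m" | "a < - (c * m)" | "- (c * m) \<le> a \<and> a \<le> c * m" by linarith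
  then show ?thesis
  proof cases
    case 1
    then have "c * m < c * h" using assms(1) by linarith
    then have "m < h" using mult_less_cancel_left_pos[OF assms(2)] by blast
    then have e: "c * (h - min h m) = c * h - c * m" by (simp add: right_diff_distrib)
    have "max (- (c * m)) (min (c * m) a) = c * m" using 1 cm by simp
    then show ?thesis unfolding e using 1 assms(1) by linarith
  next
    case 2
    then have "c * m < c * h" using assms(1) by linarith
    then have "m < h" using mult_less_cancel_left_pos[OF assms(2)] by blast
    then have e: "c * (h - min h m) = c * h - c * m" by (simp add: right_diff_distrib)
    have "max (- (c * m)) (min (c * m) a) = - (c * m)" using 2 cm by simp
    then show ?thesis unfolding e using 2 assms(1) by linarith
  next
    case 3
    have "max (- (c * m)) (min (c * m) a) = a" using 3 by simp
    moreover have "0 \<le> c * (h - min h m)" using h0 assms(2) by simp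
    ultimately show ?thesis by simp
  qed
qed

lemma tri3:
  fixes a b c d :: real
  shows "\<bar>a - d\<bar> \<le> \<bar>a - b\<bar> + \<bar>b - c\<bar> + \<bar>d - c\<bar>"
  by (smt (verit))

lemma trunc_conv:
  fixes M :: "nat \<Rightarrow> 'a::metric_space measure" and f H :: "'a \<Rightarrow> real"
  assumes bc: "\<forall>g::'a\<Rightarrow>real. continuous_on UNIV g \<and> bounded (range g) \<longrightarrow>
        ((\<lambda>n. integral\<^sup>L (M n) g) \<longlonglongrightarrow> integral\<^sup>L M0 g)"
    and P: "\<And>n. borel_prob (M n)" "borel_prob M0"
    and Hc: "continuous_on UNIV H" and H0: "\<And>z. 0 \<le> H z"
    and Hi: "\<And>n. integrable (M n) H" "integrable M0 H"
    and HL: "(\<lambda>n. integral\<^sup>L (M n) H) \<longlonglongrightarrow> integral\<^sup>L M0 H"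
    and fc: "continuous_on UNIV f" and fb: "\<And>z. \<bar>f z\<bar> \<le> C * H z"
  shows "(\<lambda>n. integral\<^sup>L (M n) f) \<longlonglongrightarrow> integral\<^sup>L M0 f"
proof -
  define C' where "C' = max C 1"
  have C': "C' > 0" by (simp add: C'_def)
  have fb': "\<bar>f z\<bar> \<le> C' * H z" for z
    using fb[of z] mult_right_mono[OF max.cobounded1 H0[of z], of C 1] unfolding C'_def by linarith
  define T where "T m z = H z - min (H z) (real m)" for m :: nat and z
  have T0: "0 \<le> T m z" "T m z \<le> H z" for m z using H0[of z] by (auto simp: T_def)
  have Tc: "continuous_on UNIV (T m)" for m
    unfolding T_def[abs_def] by (intro continuous_intros Hc)
  have Ti: "integrable \<nu> (T m)" if "borel_prob \<nu>" "integrable \<nu> H" for \<nu> m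
    by (rule integrable_by[OF that(1) Tc that(2)]) (use T0 in auto)
  have Tlim: "(\<lambda>m. integral\<^sup>L M0 (T m)) \<longlonglongrightarrow> integral\<^sup>L M0 (\<lambda>z. 0)"
  proof (rule integral_dominated_convergence[where w=H])
    show "(\<lambda>z. 0::real) \<in> borel_measurable M0" by simp
    show "T m \<in> borel_measurable M0" for m using bp_meas[OF P(2) Tc] .
    show "integrable M0 H" by fact
    show "AE x in M0. (\<lambda>i. T i x) \<longlonglongrightarrow> 0"
    proof (rule AE_I2)
      fix z
      have "eventually (\<lambda>m. T m z = 0) sequentially"
        unfolding eventually_sequentially
      proof (intro exI allI impI)
        fix m assume "nat \<lceil>H z\<rceil> \<le> m"
        then have "H z \<le> real m" using real_nat_ceiling_ge[of "H z"]
          by (meson of_nat_le_iff order_trans)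
        then show "T m z = 0" by (simp add: T_def)
      qed
      then show "(\<lambda>i. T i z) \<longlonglongrightarrow> 0" by (rule tendsto_eventually)
    qed
    show "AE x in M0. norm (T m x) \<le> H x" for m using T0 by auto
  qed
  show ?thesis
  proof (rule LIMSEQ_I)
    fix \<epsilon> :: real assume e: "\<epsilon> > 0"
    have "\<epsilon> / (4 * C') > 0" using e C' by simp
    from LIMSEQ_D[OF Tlim this] obtain m where
      "norm (integral\<^sup>L M0 (T m) - integral\<^sup>L M0 (\<lambda>z. 0)) < \<epsilon> / (4 * C')" by auto
    then have Tm: "integral\<^sup>L M0 (T m) < \<epsilon> / (4 * C')" by simp
    define K where "K = C' * real m"
    have K0: "0 \<le> K" using C' by (simp add: K_def)
    define g where "g z = max (- K) (min K (f z))" for z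
    have gc: "continuous_on UNIV g" unfolding g_def[abs_def] by (intro continuous_intros fc)
    have gb: "bounded (range g)"
      by (rule bounded_subset[OF bounded_closed_interval[of "-K" K]]) (auto simp: g_def K0)
    have gL: "(\<lambda>n. integral\<^sup>L (M n) g) \<longlonglongrightarrow> integral\<^sup>L M0 g" using bc gc gb by blast
    define mH where "mH z = min (H z) (real m)" for z
    have mHc: "continuous_on UNIV mH" unfolding mH_def[abs_def] by (intro continuous_intros Hc)
    have mHb: "bounded (range mH)"
      by (rule bounded_subset[OF bounded_closed_interval[of 0 "real m"]]) (auto simp: mH_def H0)
    have mHL: "(\<lambda>n. integral\<^sup>L (M n) mH) \<longlonglongrightarrow> integral\<^sup>L M0 mH" using bc mHc mHb by blast
    have mHi: "integrable \<nu> mH" if "borel_prob \<nu>" "integrable \<nu> H" for \<nu>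
      by (rule integrable_by[OF that(1) mHc that(2)]) (auto simp: mH_def H0 abs_le_iff)
    have Tint: "integral\<^sup>L \<nu> (T m) = integral\<^sup>L \<nu> H - integral\<^sup>L \<nu> mH"
      if "borel_prob \<nu>" "integrable \<nu> H" for \<nu>
    proof -
      have "integral\<^sup>L \<nu> (T m) = integral\<^sup>L \<nu> (\<lambda>z. H z - mH z)"
        by (simp add: T_def[abs_def] mH_def)
      also have "\<dots> = integral\<^sup>L \<nu> H - integral\<^sup>L \<nu> mH"
        by (rule Bochner_Integration.integral_diff[OF that(2) mHi[OF that]])
      finally show ?thesis .
    qed
    have TL: "(\<lambda>n. integral\<^sup>L (M n) (T m)) \<longlonglongrightarrow> integral\<^sup>L M0 (T m)"
      using tendsto_diff[OF HL mHL] Tint[OF P(1) Hi(1)] Tint[OF P(2) Hi(2)] by simp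
    have ev1: "eventually (\<lambda>n. integral\<^sup>L (M n) (T m) < \<epsilon> / (4 * C')) sequentially"
      using order_tendstoD(2)[OF TL Tm] .
    have ev2: "eventually (\<lambda>n. dist (integral\<^sup>L (M n) g) (integral\<^sup>L M0 g) < \<epsilon> / 4) sequentially"
      using tendstoD[OF gL, of "\<epsilon> / 4"] e by simp
    have fi: "integrable \<nu> f" if "borel_prob \<nu>" "integrable \<nu> H" for \<nu>
      by (rule integrable_by[OF that(1) fc, of "\<lambda>z. C' * H z"]) (use that fb' in auto)
    have gi: "integrable \<nu> g" if "borel_prob \<nu>" "integrable \<nu> H" for \<nu>
    proof (rule integrable_by[OF that(1) gc, of "\<lambda>z. C' * H z"])
      show "integrable \<nu> (\<lambda>z. C' * H z)" using that by auto
      fix z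
      have "\<bar>g z\<bar> \<le> \<bar>f z\<bar>" using K0 by (auto simp: g_def abs_le_iff max_def min_def)
      then show "\<bar>g z\<bar> \<le> C' * H z" using fb'[of z] by linarith
    qed
    have key: "\<bar>integral\<^sup>L \<nu> f - integral\<^sup>L \<nu> g\<bar> \<le> C' * integral\<^sup>L \<nu> (T m)"
      if "borel_prob \<nu>" "integrable \<nu> H" for \<nu>
    proof -
      have pw: "\<bar>f z - g z\<bar> \<le> C' * T m z" for z
        unfolding g_def K_def T_def by (rule clamp_bound[OF fb' C']) simp
      have "integral\<^sup>L \<nu> f - integral\<^sup>L \<nu> g = integral\<^sup>L \<nu> (\<lambda>z. f z - g z)"
        by (rule Bochner_Integration.integral_diff[symmetric, OF fi[OF that] gi[OF that]])
      also have "\<bar>\<dots>\<bar> \<le> integral\<^sup>L \<nu> (\<lambda>z. \<bar>f z - g z\<bar>)"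
        using integral_norm_bound[of \<nu> "\<lambda>z. f z - g z"] by simp
      also have "\<dots> \<le> integral\<^sup>L \<nu> (\<lambda>z. C' * T m z)"
        by (intro integral_mono integrable_abs Bochner_Integration.integrable_diff fi[OF that] gi[OF that]
             integrable_mult_right Ti[OF that] pw)
      also have "\<dots> = C' * integral\<^sup>L \<nu> (T m)" by simp
      finally show ?thesis .
    qed
    obtain N where N: "\<And>n. n \<ge> N \<Longrightarrow> integral\<^sup>L (M n) (T m) < \<epsilon> / (4 * C') \<and>
          dist (integral\<^sup>L (M n) g) (integral\<^sup>L M0 g) < \<epsilon> / 4"
      using eventually_conj[OF ev1 ev2] unfolding eventually_sequentially by blast
    show "\<exists>N. \<forall>n\<ge>N. norm (integral\<^sup>L (M n) f - integral\<^sup>L M0 f) < \<epsilon>"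
    proof (intro exI allI impI)
      fix n assume "n \<ge> N"
      note Nn = N[OF this]
      have k1: "\<bar>integral\<^sup>L (M n) f - integral\<^sup>L (M n) g\<bar> \<le> C' * integral\<^sup>L (M n) (T m)"
        using key[OF P(1) Hi(1)] .
      have k2: "\<bar>integral\<^sup>L M0 f - integral\<^sup>L M0 g\<bar> \<le> C' * integral\<^sup>L M0 (T m)"
        using key[OF P(2) Hi(2)] .
      have "C' * integral\<^sup>L (M n) (T m) < C' * (\<epsilon> / (4 * C'))" using mult_strict_left_mono[OF conjunct1[OF Nn] C'] .
      moreover have "C' * integral\<^sup>L M0 (T m) < C' * (\<epsilon> / (4 * C'))" using mult_strict_left_mono[OF Tm C'] .
      moreover have "C' * (\<epsilon> / (4 * C')) = \<epsilon> / 4" using C' by simp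
      moreover have "\<bar>integral\<^sup>L (M n) g - integral\<^sup>L M0 g\<bar> < \<epsilon> / 4"
        using Nn by (simp add: dist_real_def)
      moreover note tri3[of "integral\<^sup>L (M n) f" "integral\<^sup>L (M n) g" "integral\<^sup>L M0 g" "integral\<^sup>L M0 f"]
      ultimately show "norm (integral\<^sup>L (M n) f - integral\<^sup>L M0 f) < \<epsilon>"
        using k1 k2 unfolding real_norm_def by linarith
    qed
  qed
qed

lemma integral_one_plus:
  fixes g :: "'a::metric_space \<Rightarrow> real"
  assumes "borel_prob \<nu>" "integrable \<nu> g"
  shows "integral\<^sup>L \<nu> (\<lambda>z. 1 + g z) = 1 + integral\<^sup>L \<nu> g"
proof -
  have ps: "prob_space \<nu>" using assms by (simp add: borel_prob_def)
  then have m: "measure \<nu> (space \<nu>) = 1" by (rule prob_space.prob_space)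
  have i1: "integrable \<nu> (\<lambda>z. 1::real)" using ps by (simp add: prob_space_def finite_measure.integrable_const)
  show ?thesis using Bochner_Integration.integral_add[OF i1 assms(2)] m by simp
qed

lemma Lint:
  fixes f :: "'a::metric_space \<Rightarrow> real"
  assumes "\<mu> \<in> Pr q" "0 \<le> q" "continuous_on UNIV f"
    "\<And>z. \<bar>f z\<bar> \<le> C * (1 + dpow (dist x z) q)"
  shows "integrable \<mu> f"
proof -
  have bp: "borel_prob \<mu>" using assms by (simp add: Pr_def)
  show ?thesis
    by (rule integrable_by[OF bp assms(3) _ assms(4)]) (use Pr_intH[OF assms(1,2)] in auto)
qed

lemma Lconv:
  fixes f :: "'a::metric_space \<Rightarrow> real"
  assumes q: "0 \<le> q" and conv: "conv_tw q \<mu>s \<mu>" and Pn: "\<And>n. \<mu>s n \<in> Pr q" and P: "\<mu> \<in> Pr q"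
    and fc: "continuous_on UNIV f" and fb: "\<And>z. \<bar>f z\<bar> \<le> C * (1 + dpow (dist x z) q)"
  shows "(\<lambda>n. integral\<^sup>L (\<mu>s n) f) \<longlonglongrightarrow> integral\<^sup>L \<mu> f"
proof (rule trunc_conv[where H = "\<lambda>z. 1 + dpow (dist x z) q"])
  show "\<forall>g::'a\<Rightarrow>real. continuous_on UNIV g \<and> bounded (range g) \<longrightarrow>
        ((\<lambda>n. integral\<^sup>L (\<mu>s n) g) \<longlonglongrightarrow> integral\<^sup>L \<mu> g)" using conv by (simp add: conv_tw_def)
  show bpn: "borel_prob (\<mu>s n)" for n using Pn by (simp add: Pr_def)
  show bp: "borel_prob \<mu>" using P by (simp add: Pr_def)
  show "continuous_on UNIV (\<lambda>z. 1 + dpow (dist x z) q)" by (intro continuous_intros cont_dpow_dist q)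
  show "0 \<le> 1 + dpow (dist x z) q" for z using dpow_nonneg[of "dist x z" q] by linarith
  show "integrable (\<mu>s n) (\<lambda>z. 1 + dpow (dist x z) q)" for n using Pr_intH[OF Pn q] .
  show "integrable \<mu> (\<lambda>z. 1 + dpow (dist x z) q)" using Pr_intH[OF P q] .
  have "(\<lambda>n. integral\<^sup>L (\<mu>s n) (\<lambda>z. dpow (dist x z) q)) \<longlonglongrightarrow> integral\<^sup>L \<mu> (\<lambda>z. dpow (dist x z) q)"
    using conv by (simp add: conv_tw_def)
  then show "(\<lambda>n. integral\<^sup>L (\<mu>s n) (\<lambda>z. 1 + dpow (dist x z) q)) \<longlonglongrightarrow> integral\<^sup>L \<mu> (\<lambda>z. 1 + dpow (dist x z) q)"
    by (simp add: integral_one_plus[OF bpn Pr_int[OF Pn q]] integral_one_plus[OF bp Pr_int[OF P q]] tendsto_add)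
qed (use fc fb in auto)

definition Kc :: "real \<Rightarrow> real \<Rightarrow> real" where
  "Kc p b = p * b * 2 powr (p - 1) * (1 + dpow b (p - 1))"

lemma Kc_nonneg: "1 \<le> p \<Longrightarrow> 0 \<le> b \<Longrightarrow> 0 \<le> Kc p b"
  unfolding Kc_def using dpow_nonneg[of b "p - 1"] by simp

lemma gen_bound:
  assumes p: "1 \<le> p" and st: "0 \<le> s" "0 \<le> t" and b: "\<bar>s - t\<bar> \<le> b"
  shows "\<bar>dpow s p - dpow t p\<bar> \<le> Kc p b * (1 + dpow t (p - 1))"
proof -
  have b0: "0 \<le> b" using b by linarith
  have pp: "p \<noteq> 0" using p by simp
  have "\<bar>dpow s p - dpow t p\<bar> = \<bar>s powr p - t powr p\<bar>" using pp by (simp add: dpow_def)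
  also have "\<dots> \<le> p * \<bar>s - t\<bar> * dpow (max s t) (p - 1)" by (rule pow_diff[OF st(2,1) p])
  also have "\<dots> \<le> p * b * dpow (t + b) (p - 1)"
  proof (intro mult_mono)
    show "dpow (max s t) (p - 1) \<le> dpow (t + b) (p - 1)"
      using st b p by (intro dpow_mono) auto
  qed (use p b b0 dpow_nonneg in auto)
  also have "\<dots> \<le> p * b * (2 powr (p - 1) * (dpow t (p - 1) + dpow b (p - 1)))"
    using p b0 st by (intro mult_left_mono dpow_add) auto
  also have "\<dots> \<le> p * b * (2 powr (p - 1) * ((1 + dpow b (p - 1)) * (1 + dpow t (p - 1))))"
  proof -
    have "dpow t (p - 1) + dpow b (p - 1) \<le> (1 + dpow b (p - 1)) * (1 + dpow t (p - 1))"
      using dpow_nonneg[of t "p - 1"] dpow_nonneg[of b "p - 1"] by (simp add: algebra_simps)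
    then show ?thesis using p b0 by (intro mult_left_mono) auto
  qed
  also have "\<dots> = Kc p b * (1 + dpow t (p - 1))" by (simp add: Kc_def)
  finally show ?thesis .
qed

lemma lip_cont:
  fixes f :: "'a::metric_space \<Rightarrow> real"
  assumes "\<And>z z'. f z \<le> f z' + dist z z'"
  shows "continuous_on UNIV f"
  unfolding continuous_on_iff
proof (intro ballI allI impI exI conjI)
  fix x :: 'a and e :: real assume "0 < e"
  then show "0 < e" .
  fix x' assume "dist x' x < e"
  moreover have "\<bar>f x' - f x\<bar> \<le> dist x' x"
    using assms[of x' x] assms[of x x'] by (simp add: dist_commute abs_le_iff)
  ultimately show "dist (f x') (f x) < e" by (simp add: dist_real_def)
qed

definition vf :: "(nat \<Rightarrow> 'a::metric_space) \<Rightarrow> nat \<Rightarrow> 'a \<Rightarrow> real" where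
  "vf y k z = (INF n\<in>{k..}. dist (y n) z)"

definition Lf :: "(nat \<Rightarrow> 'a::metric_space) \<Rightarrow> 'a \<Rightarrow> real" where
  "Lf y z = (SUP k. vf y k z)"

lemma vf_bdd: "bdd_below ((\<lambda>n. dist (y n) z) ` A)"
  by (rule bdd_belowI[of _ 0]) auto

lemma vf_le: "k \<le> n \<Longrightarrow> vf y k z \<le> dist (y n) z"
  unfolding vf_def by (rule cINF_lower[OF vf_bdd]) auto

lemma vf_ge: "(\<And>n. k \<le> n \<Longrightarrow> c \<le> dist (y n) z) \<Longrightarrow> c \<le> vf y k z"
  unfolding vf_def by (rule cINF_greatest) auto

lemma vf_nonneg: "0 \<le> vf y k z"
  by (rule vf_ge) auto

lemma vf_mono: "vf y k z \<le> vf y (Suc k) z"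
  unfolding vf_def by (rule cINF_superset_mono[OF _ vf_bdd]) auto

lemma vf_lip: "vf y k z \<le> vf y k z' + dist z z'"
proof -
  have "vf y k z - dist z z' \<le> vf y k z'"
  proof (rule vf_ge)
    fix n assume "k \<le> n"
    then have "vf y k z \<le> dist (y n) z" by (rule vf_le)
    also have "\<dots> \<le> dist (y n) z' + dist z z'" by (metis dist_commute dist_triangle)
    finally show "vf y k z - dist z z' \<le> dist (y n) z'" by simp
  qed
  then show ?thesis by simp
qed

lemma vf_cont: "continuous_on UNIV (vf y k)"
  by (rule lip_cont) (rule vf_lip)

lemma vf_close:
  assumes "\<And>n. \<bar>dist (y n) z - t\<bar> \<le> b"
  shows "\<bar>vf y k z - t\<bar> \<le> b"
proof -
  have "t - b \<le> vf y k z"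
  proof (rule vf_ge)
    fix n show "t - b \<le> dist (y n) z" using assms[of n] by (simp add: abs_le_iff)
  qed
  moreover have "vf y k z \<le> dist (y k) z" by (rule vf_le) simp
  ultimately show ?thesis using assms[of k] by (simp add: abs_le_iff)
qed

lemma vf_lim:
  assumes "\<And>n. \<bar>dist (y n) z - t\<bar> \<le> b"
  shows "(\<lambda>k. vf y k z) \<longlonglongrightarrow> Lf y z"
  unfolding Lf_def
proof (rule LIMSEQ_incseq_SUP)
  have c: "vf y k z \<le> t + b" for k using vf_close[of y z t b k, OF assms] by (simp add: abs_le_iff)
  show "bdd_above (range (\<lambda>k. vf y k z))"
    by (rule bdd_aboveI[of _ "t + b"]) (auto simp: c)
  show "incseq (\<lambda>k. vf y k z)" by (rule incseq_SucI) (rule vf_mono)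
qed

lemma Lf_close:
  assumes "\<And>n. \<bar>dist (y n) z - t\<bar> \<le> b"
  shows "\<bar>Lf y z - t\<bar> \<le> b" "0 \<le> Lf y z"
proof -
  have l: "(\<lambda>k. vf y k z) \<longlonglongrightarrow> Lf y z" by (rule vf_lim[of y z t b, OF assms])
  have c: "t - b \<le> vf y k z \<and> vf y k z \<le> t + b" for k
    using vf_close[of y z t b k, OF assms] by (simp add: abs_le_iff)
  have "t - b \<le> Lf y z" by (rule LIMSEQ_le_const[OF l]) (use c in auto)
  moreover have "Lf y z \<le> t + b" by (rule LIMSEQ_le_const2[OF l]) (use c in auto)
  ultimately show "\<bar>Lf y z - t\<bar> \<le> b" by (simp add: abs_le_iff)
  show "0 \<le> Lf y z" by (rule LIMSEQ_le_const[OF l]) (use vf_nonneg in auto)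
qed

lemma dist_diff3: "\<bar>dist x z - dist x' z\<bar> \<le> dist x x'"
  by (metis abs_dist_diff_le dist_commute)

lemma Wp_int:
  assumes p: "1 \<le> p" and P: "\<mu> \<in> Pr (p - 1)"
  shows "integrable \<mu> (\<lambda>z. dpow (dist x z) p - dpow (dist x' z) p)"
proof (rule Lint[OF P _ _ gen_bound[OF p _ _ dist_diff3]])
  show "continuous_on UNIV (\<lambda>z. dpow (dist x z) p - dpow (dist x' z) p)"
    using p by (intro continuous_on_diff cont_dpow_dist) auto
qed (use p in auto)

lemma Wp_split:
  assumes p: "1 \<le> p" and P: "\<mu> \<in> Pr (p - 1)"
  shows "Wp p \<mu> x x' = Wp p \<mu> x x0 - Wp p \<mu> x' x0"
proof -
  have "Wp p \<mu> x x0 - Wp p \<mu> x' x0 =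
     integral\<^sup>L \<mu> (\<lambda>z. (dpow (dist x z) p - dpow (dist x0 z) p) - (dpow (dist x' z) p - dpow (dist x0 z) p))"
    unfolding Wp_def by (rule Bochner_Integration.integral_diff[symmetric, OF Wp_int[OF p P] Wp_int[OF p P]])
  then show ?thesis by (simp add: Wp_def)
qed

lemma fatou:
  fixes y :: "nat \<Rightarrow> 'a::metric_space"
  assumes p: "1 \<le> p" and conv: "conv_tw (p - 1) \<mu>s \<mu>" and Pn: "\<And>n. \<mu>s n \<in> Pr (p - 1)"
    and P: "\<mu> \<in> Pr (p - 1)"
    and yb: "\<And>n. dist (y n) x' \<le> b"
    and Wa: "\<And>n. Wp p (\<mu>s n) (y n) x' \<le> a n" and al: "a \<longlonglongrightarrow> a0"
  shows "integrable \<mu> (\<lambda>z. dpow (Lf y z) p - dpow (dist x' z) p)"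
    "integral\<^sup>L \<mu> (\<lambda>z. dpow (Lf y z) p - dpow (dist x' z) p) \<le> a0"
proof -
  have q0: "0 \<le> p - 1" using p by simp
  have pp: "p \<noteq> 0" using p by simp
  have close: "\<bar>dist (y n) z - dist x' z\<bar> \<le> b" for n z
    using dist_diff3[of "y n" z x'] yb[of n] by linarith
  define f where "f k z = dpow (vf y k z) p - dpow (dist x' z) p" for k z
  define fi where "fi z = dpow (Lf y z) p - dpow (dist x' z) p" for z
  define w where "w z = Kc p b * (1 + dpow (dist x' z) (p - 1))" for z
  have fb: "\<bar>f k z\<bar> \<le> w z" for k z
    unfolding f_def w_def by (rule gen_bound[OF p vf_nonneg _ vf_close[of y z _ b, OF close]]) simp
  have fib: "\<bar>fi z\<bar> \<le> w z" for z
    unfolding fi_def w_def by (rule gen_bound[OF p Lf_close(2)[of y z _ b, OF close] _ Lf_close(1)[of y z _ b, OF close]]) simp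
  have fc: "continuous_on UNIV (f k)" for k
    unfolding f_def[abs_def] using q0 p
    by (intro continuous_on_diff cont_dpow_dist cont_dpow[OF vf_cont vf_nonneg]) auto
  have flim: "(\<lambda>k. f k z) \<longlonglongrightarrow> fi z" for z
  proof -
    have "(\<lambda>k. vf y k z powr p) \<longlonglongrightarrow> Lf y z powr p"
      by (rule tendsto_powr'[OF vf_lim[of y z _ b, OF close] tendsto_const]) (use p in \<open>simp add: vf_nonneg\<close>)
    then show ?thesis unfolding f_def fi_def using pp by (simp add: dpow_def tendsto_diff)
  qed
  have bp: "borel_prob \<mu>" using P by (simp add: Pr_def)
  have wi: "integrable \<mu> w" unfolding w_def using Pr_intH[OF P q0] by auto
  have fint: "integrable \<nu> (f k)" if "\<nu> \<in> Pr (p - 1)" for \<nu> k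
    by (rule Lint[OF that q0 fc]) (use fb in \<open>simp add: w_def\<close>)
  have step1: "integral\<^sup>L \<mu> (f k) \<le> a0" for k
  proof (rule LIMSEQ_le[OF _ al])
    show "(\<lambda>n. integral\<^sup>L (\<mu>s n) (f k)) \<longlonglongrightarrow> integral\<^sup>L \<mu> (f k)"
      by (rule Lconv[OF q0 conv Pn P fc]) (use fb in \<open>simp add: w_def\<close>)
    show "\<exists>N. \<forall>n\<ge>N. integral\<^sup>L (\<mu>s n) (f k) \<le> a n"
    proof (intro exI allI impI)
      fix n assume kn: "k \<le> n"
      have "integral\<^sup>L (\<mu>s n) (f k) \<le> integral\<^sup>L (\<mu>s n) (\<lambda>z. dpow (dist (y n) z) p - dpow (dist x' z) p)"
      proof (rule integral_mono[OF fint[OF Pn] Wp_int[OF p Pn]])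
        fix z show "f k z \<le> dpow (dist (y n) z) p - dpow (dist x' z) p"
          unfolding f_def using dpow_mono[OF vf_nonneg vf_le[OF kn], of p] p by simp
      qed
      also have "\<dots> = Wp p (\<mu>s n) (y n) x'" by (simp add: Wp_def)
      also have "\<dots> \<le> a n" by (rule Wa)
      finally show "integral\<^sup>L (\<mu>s n) (f k) \<le> a n" .
    qed
  qed
  have fim: "fi \<in> borel_measurable \<mu>"
    by (rule borel_measurable_LIMSEQ_real[OF flim]) (rule bp_meas[OF bp fc])
  have dc: "(\<lambda>k. integral\<^sup>L \<mu> (f k)) \<longlonglongrightarrow> integral\<^sup>L \<mu> fi"
    and ii: "integrable \<mu> fi"
  proof -
    have a: "\<And>k. f k \<in> borel_measurable \<mu>" by (rule bp_meas[OF bp fc])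
    have b: "AE z in \<mu>. (\<lambda>k. f k z) \<longlonglongrightarrow> fi z" using flim by simp
    have c: "\<And>k. AE z in \<mu>. norm (f k z) \<le> w z" using fb by simp
    show "(\<lambda>k. integral\<^sup>L \<mu> (f k)) \<longlonglongrightarrow> integral\<^sup>L \<mu> fi"
      by (rule integral_dominated_convergence[OF fim a wi b c])
    show "integrable \<mu> fi"
      by (rule integrable_dominated_convergence[OF fim a wi b c])
  qed
  show "integrable \<mu> (\<lambda>z. dpow (Lf y z) p - dpow (dist x' z) p)" using ii by (simp add: fi_def[abs_def])
  have "integral\<^sup>L \<mu> fi \<le> a0" by (rule LIMSEQ_le_const2[OF dc]) (use step1 in auto)
  then show "integral\<^sup>L \<mu> (\<lambda>z. dpow (Lf y z) p - dpow (dist x' z) p) \<le> a0" by (simp add: fi_def[abs_def])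
qed

lemma pw_coer:
  fixes D a e R p :: real
  assumes p: "1 \<le> p" and a0: "0 \<le> a" and e0: "0 \<le> e" and ea: "\<bar>e - a\<bar> \<le> D"
    and eD: "D - a \<le> e" and D1: "1 \<le> D" and DR: "3 * R \<le> D"
  shows "D * ((1 / 3 powr p) * max 0 (min 1 (R - a)) - p * 4 powr (p - 1) * (dpow a (p - 1) * (1 - max 0 (min 1 (R - a)))))
           \<le> e powr p - a powr p"
proof (cases "a \<le> D / 3")
  case True
  define \<psi> where "\<psi> = max 0 (min 1 (R - a))"
  have \<psi>: "0 \<le> \<psi>" "\<psi> \<le> 1" by (auto simp: \<psi>_def)
  have e2: "2 * (D / 3) \<le> e" using eD True by simp
  have E1: "(2 * (D / 3)) powr p \<le> e powr p" using e2 D1 p by (intro powr_mono2) auto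
  have E2: "(2 * (D / 3)) powr p = 2 powr p * (D / 3) powr p" using powr_mult[of 2 "D / 3" p] D1 by simp
  have E3: "a powr p \<le> (D / 3) powr p" using True a0 p by (intro powr_mono2) auto
  have E4: "2 \<le> 2 powr p" using powr_mono[of 1 p 2] p by simp
  have E5: "0 \<le> (D / 3) powr p" by simp
  have "2 * (D / 3) powr p \<le> 2 powr p * (D / 3) powr p" by (rule mult_right_mono[OF E4 E5])
  then have E6: "(D / 3) powr p \<le> e powr p - a powr p" using E1 E2 E3 by linarith
  have E7: "(D / 3) powr p = D powr p / 3 powr p" using D1 by (simp add: powr_divide)
  have E8: "D \<le> D powr p" using powr_mono[of 1 p D] D1 p by simp
  have "D / 3 powr p \<le> D powr p / 3 powr p" by (rule divide_right_mono[OF E8]) simp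
  then have A: "D / 3 powr p \<le> e powr p - a powr p" using E6 E7 by linarith
  have "D * ((1 / 3 powr p) * \<psi> - p * 4 powr (p - 1) * (dpow a (p - 1) * (1 - \<psi>))) \<le> D * (1 / 3 powr p)"
  proof (rule mult_left_mono)
    have "0 \<le> p * 4 powr (p - 1) * (dpow a (p - 1) * (1 - \<psi>))"
      using p \<psi> dpow_nonneg[of a "p - 1"] by simp
    moreover have "(1 / 3 powr p) * \<psi> \<le> 1 / 3 powr p" using \<psi> by (simp add: divide_right_mono)
    ultimately show "(1 / 3 powr p) * \<psi> - p * 4 powr (p - 1) * (dpow a (p - 1) * (1 - \<psi>)) \<le> 1 / 3 powr p"
      by linarith
  qed (use D1 in auto)
  then show ?thesis using A unfolding \<psi>_def by simp
next
  case False
  then have "R < a" using DR by linarith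
  then have \<psi>: "max 0 (min 1 (R - a)) = 0" by simp
  have "\<bar>e powr p - a powr p\<bar> \<le> p * \<bar>e - a\<bar> * dpow (max e a) (p - 1)"
    by (rule pow_diff[OF a0 e0 p])
  also have "\<dots> \<le> p * D * dpow (4 * a) (p - 1)"
  proof (intro mult_mono)
    show "dpow (max e a) (p - 1) \<le> dpow (4 * a) (p - 1)"
      using False ea a0 e0 p by (intro dpow_mono) (auto simp: abs_le_iff)
  qed (use p ea dpow_nonneg D1 in auto)
  also have "\<dots> = p * D * (4 powr (p - 1) * dpow a (p - 1))"
    using a0 by (simp add: dpow_mult)
  finally show ?thesis unfolding \<psi> by (simp add: abs_le_iff algebra_simps)
qed

lemma ev_const_lim: "eventually (\<lambda>m. X m = c) sequentially \<Longrightarrow> X \<longlonglongrightarrow> c"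
  by (rule tendsto_eventually)

lemma coercive:
  fixes \<mu>s :: "nat \<Rightarrow> 'a::metric_space measure"
  assumes p: "1 \<le> p" and conv: "conv_tw (p - 1) \<mu>s \<mu>" and Pn: "\<And>n. \<mu>s n \<in> Pr (p - 1)"
    and P: "\<mu> \<in> Pr (p - 1)"
  shows "\<exists>R0 \<kappa> N. 0 < \<kappa> \<and> (\<forall>n\<ge>N. \<forall>y. R0 \<le> dist y x0 \<longrightarrow> \<kappa> * dist y x0 \<le> Wp p (\<mu>s n) y x0)"
proof -
  have q0: "0 \<le> p - 1" using p by simp
  have pp: "p \<noteq> 0" using p by simp
  have bp: "borel_prob \<mu>" using P by (simp add: Pr_def)
  have ps: "prob_space \<mu>" using bp by (simp add: borel_prob_def)
  define A where "A z = dpow (dist x0 z) (p - 1)" for z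
  define \<psi> where "\<psi> m z = max 0 (min 1 (real m - dist x0 z))" for m :: nat and z
  define h1 where "h1 m z = A z * (1 - \<psi> m z)" for m z
  define c3 where "c3 = 3 powr p"
  define c4 where "c4 = 4 powr (p - 1)"
  define \<delta> where "\<delta> = 1 / (8 * p * c4 * c3)"
  have c3: "0 < c3" by (simp add: c3_def)
  have c4: "0 < c4" by (simp add: c4_def)
  have \<delta>: "0 < \<delta>" using c3 c4 p by (simp add: \<delta>_def)
  have A0: "0 \<le> A z" for z by (simp add: A_def dpow_nonneg)
  have Ac: "continuous_on UNIV A" unfolding A_def[abs_def] by (rule cont_dpow_dist[OF q0])
  have \<psi>01: "0 \<le> \<psi> m z" "\<psi> m z \<le> 1" for m z by (auto simp: \<psi>_def)
  have \<psi>c: "continuous_on UNIV (\<psi> m)" for m unfolding \<psi>_def[abs_def] by (intro continuous_intros)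
  have h1c: "continuous_on UNIV (h1 m)" for m unfolding h1_def[abs_def] by (intro continuous_intros Ac \<psi>c)
  have h1b: "0 \<le> h1 m z" "h1 m z \<le> A z" for m z
    using \<psi>01[of m z] A0[of z] by (auto simp: h1_def mult_left_le)
  have \<psi>ev: "eventually (\<lambda>m. \<psi> m z = 1) sequentially" for z
    unfolding eventually_sequentially
  proof (intro exI allI impI)
    fix m assume "nat \<lceil>dist x0 z\<rceil> + 1 \<le> m"
    then have "dist x0 z + 1 \<le> real m" using real_nat_ceiling_ge[of "dist x0 z"] by linarith
    then show "\<psi> m z = 1" by (simp add: \<psi>_def)
  qed
  have L1: "(\<lambda>m. integral\<^sup>L \<mu> (\<psi> m)) \<longlonglongrightarrow> integral\<^sup>L \<mu> (\<lambda>z. 1)"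
  proof (rule integral_dominated_convergence[where w = "\<lambda>z. 1"])
    show "(\<lambda>z. 1::real) \<in> borel_measurable \<mu>" by simp
    show "\<psi> m \<in> borel_measurable \<mu>" for m by (rule bp_meas[OF bp \<psi>c])
    show "integrable \<mu> (\<lambda>z. 1::real)" using ps by (simp add: prob_space_def finite_measure.integrable_const)
    show "AE z in \<mu>. (\<lambda>m. \<psi> m z) \<longlonglongrightarrow> 1" using \<psi>ev by (simp add: ev_const_lim)
    show "AE z in \<mu>. norm (\<psi> m z) \<le> 1" for m using \<psi>01 by simp
  qed
  have L2: "(\<lambda>m. integral\<^sup>L \<mu> (h1 m)) \<longlonglongrightarrow> integral\<^sup>L \<mu> (\<lambda>z. 0)"
  proof (rule integral_dominated_convergence[where w = A])
    show "(\<lambda>z. 0::real) \<in> borel_measurable \<mu>" by simp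
    show "h1 m \<in> borel_measurable \<mu>" for m by (rule bp_meas[OF bp h1c])
    show "integrable \<mu> A" unfolding A_def using Pr_int[OF P q0] .
    show "AE z in \<mu>. (\<lambda>m. h1 m z) \<longlonglongrightarrow> 0"
    proof (rule AE_I2, rule ev_const_lim)
      fix z show "eventually (\<lambda>m. h1 m z = 0) sequentially"
        using \<psi>ev[of z] by eventually_elim (simp add: h1_def)
    qed
    show "AE z in \<mu>. norm (h1 m z) \<le> A z" for m using h1b by simp
  qed
  have m1: "measure \<mu> (space \<mu>) = 1" using ps by (rule prob_space.prob_space)
  have ev1: "eventually (\<lambda>m. 3 / 4 < integral\<^sup>L \<mu> (\<psi> m)) sequentially"
    by (rule order_tendstoD(1)[OF L1]) (simp add: m1)
  have ev2: "eventually (\<lambda>m. integral\<^sup>L \<mu> (h1 m) < \<delta>) sequentially"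
    by (rule order_tendstoD(2)[OF L2]) (simp add: \<delta>)
  obtain m where m1: "3 / 4 < integral\<^sup>L \<mu> (\<psi> m)" and m2: "integral\<^sup>L \<mu> (h1 m) < \<delta>"
    using eventually_happens'[OF sequentially_bot eventually_conj[OF ev1 ev2]] by blast
  have C1: "(\<lambda>n. integral\<^sup>L (\<mu>s n) (\<psi> m)) \<longlonglongrightarrow> integral\<^sup>L \<mu> (\<psi> m)"
  proof (rule Lconv[OF q0 conv Pn P \<psi>c, where C = 1 and x = x0])
    fix z show "\<bar>\<psi> m z\<bar> \<le> 1 * (1 + dpow (dist x0 z) (p - 1))"
      using \<psi>01[of m z] A0[of z] by (simp add: A_def)
  qed
  have C2: "(\<lambda>n. integral\<^sup>L (\<mu>s n) (h1 m)) \<longlonglongrightarrow> integral\<^sup>L \<mu> (h1 m)"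
  proof (rule Lconv[OF q0 conv Pn P h1c, where C = 1 and x = x0])
    fix z show "\<bar>h1 m z\<bar> \<le> 1 * (1 + dpow (dist x0 z) (p - 1))"
      using h1b[of m z] by (simp add: A_def)
  qed
  have ev3: "eventually (\<lambda>n. 1 / 2 < integral\<^sup>L (\<mu>s n) (\<psi> m)) sequentially"
    by (rule order_tendstoD(1)[OF C1]) (use m1 in simp)
  have ev4: "eventually (\<lambda>n. integral\<^sup>L (\<mu>s n) (h1 m) < \<delta>) sequentially"
    by (rule order_tendstoD(2)[OF C2 m2])
  obtain N where N: "\<And>n. N \<le> n \<Longrightarrow> 1 / 2 < integral\<^sup>L (\<mu>s n) (\<psi> m) \<and> integral\<^sup>L (\<mu>s n) (h1 m) < \<delta>"
    using eventually_conj[OF ev3 ev4] unfolding eventually_sequentially by blast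
  define \<kappa> where "\<kappa> = 3 / (8 * c3)"
  show ?thesis
  proof (intro exI conjI allI impI)
    show "0 < \<kappa>" using c3 by (simp add: \<kappa>_def)
    fix n y assume nN: "N \<le> n" and Dy: "max (3 * real m) 1 \<le> dist y x0"
    define D where "D = dist y x0"
    have D1: "1 \<le> D" and DR: "3 * real m \<le> D" using Dy by (auto simp: D_def)
    define h where "h z = (1 / c3) * \<psi> m z - p * c4 * h1 m z" for z
    have Pn': "\<mu>s n \<in> Pr (p - 1)" by (rule Pn)
    have bpn: "borel_prob (\<mu>s n)" using Pn' by (simp add: Pr_def)
    have i\<psi>: "integrable (\<mu>s n) (\<psi> m)"
    proof (rule Lint[OF Pn' q0 \<psi>c, where C = 1 and x = x0])
      fix z show "\<bar>\<psi> m z\<bar> \<le> 1 * (1 + dpow (dist x0 z) (p - 1))"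
        using \<psi>01[of m z] A0[of z] by (simp add: A_def)
    qed
    have ih1: "integrable (\<mu>s n) (h1 m)"
    proof (rule Lint[OF Pn' q0 h1c, where C = 1 and x = x0])
      fix z show "\<bar>h1 m z\<bar> \<le> 1 * (1 + dpow (dist x0 z) (p - 1))"
        using h1b[of m z] by (simp add: A_def)
    qed
    have ih: "integrable (\<mu>s n) (\<lambda>z. D * h z)" unfolding h_def using i\<psi> ih1 by auto
    have inth: "integral\<^sup>L (\<mu>s n) h = (1 / c3) * integral\<^sup>L (\<mu>s n) (\<psi> m) - p * c4 * integral\<^sup>L (\<mu>s n) (h1 m)"
      unfolding h_def using i\<psi> ih1 by simp
    have pw: "D * h z \<le> dpow (dist y z) p - dpow (dist x0 z) p" for z
    proof -
      have "D * h z = D * ((1 / 3 powr p) * max 0 (min 1 (real m - dist x0 z)) - p * 4 powr (p - 1) *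
            (dpow (dist x0 z) (p - 1) * (1 - max 0 (min 1 (real m - dist x0 z)))))"
        by (simp add: h_def h1_def \<psi>_def A_def c3_def c4_def)
      also have "\<dots> \<le> dist y z powr p - dist x0 z powr p"
      proof (rule pw_coer[OF p])
        show "\<bar>dist y z - dist x0 z\<bar> \<le> D" unfolding D_def by (rule dist_diff3)
        show "D - dist x0 z \<le> dist y z" unfolding D_def
          using dist_triangle[of y x0 z] by (simp add: dist_commute)
      qed (use D1 DR in auto)
      finally show ?thesis using pp by (simp add: dpow_def)
    qed
    have "D * integral\<^sup>L (\<mu>s n) h = integral\<^sup>L (\<mu>s n) (\<lambda>z. D * h z)" by simp
    also have "\<dots> \<le> integral\<^sup>L (\<mu>s n) (\<lambda>z. dpow (dist y z) p - dpow (dist x0 z) p)"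
      by (rule integral_mono[OF ih Wp_int[OF p Pn'] pw])
    also have "\<dots> = Wp p (\<mu>s n) y x0" by (simp add: Wp_def)
    finally have W: "D * integral\<^sup>L (\<mu>s n) h \<le> Wp p (\<mu>s n) y x0" .
    have "\<kappa> \<le> integral\<^sup>L (\<mu>s n) h"
    proof -
      have a: "(1 / c3) * (1 / 2) \<le> (1 / c3) * integral\<^sup>L (\<mu>s n) (\<psi> m)"
        using N[OF nN] c3 by (intro mult_left_mono) auto
      have b: "p * c4 * integral\<^sup>L (\<mu>s n) (h1 m) \<le> p * c4 * \<delta>"
        using N[OF nN] c4 p by (intro mult_left_mono) auto
      have c: "p * c4 * \<delta> = 1 / (8 * c3)" using c3 c4 p by (simp add: \<delta>_def)
      have d: "\<kappa> = (1 / c3) * (1 / 2) - 1 / (8 * c3)" using c3 by (simp add: \<kappa>_def field_simps)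
      show ?thesis using a b c d inth by linarith
    qed
    then have "\<kappa> * D \<le> integral\<^sup>L (\<mu>s n) h * D" using D1 by (intro mult_right_mono) auto
    then show "\<kappa> * dist y x0 \<le> Wp p (\<mu>s n) y x0" using W by (simp add: D_def mult.commute)
  qed
qed

lemma bounded_seq:
  fixes \<mu>s :: "nat \<Rightarrow> 'a::metric_space measure"
  assumes p: "1 \<le> p" and conv: "conv_tw (p - 1) \<mu>s \<mu>" and Pn: "\<And>n. \<mu>s n \<in> Pr (p - 1)"
    and P: "\<mu> \<in> Pr (p - 1)"
    and Wa: "\<And>n. Wp p (\<mu>s n) (y n) x0 \<le> Amax"
  shows "\<exists>B. \<forall>n. dist (y n) x0 \<le> B"
proof -
  obtain R0 \<kappa> N where k: "0 < \<kappa>" and co: "\<And>n y. N \<le> n \<Longrightarrow> R0 \<le> dist y x0 \<Longrightarrow> \<kappa> * dist y x0 \<le> Wp p (\<mu>s n) y x0"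
    using coercive[OF p conv Pn P, of x0] by blast
  define B where "B = max (max R0 (Amax / \<kappa>)) (\<Sum>n<N. dist (y n) x0)"
  show ?thesis
  proof (intro exI allI)
    fix n
    show "dist (y n) x0 \<le> B"
    proof (cases "N \<le> n")
      case True
      show ?thesis
      proof (cases "R0 \<le> dist (y n) x0")
        case True2: True
        have "\<kappa> * dist (y n) x0 \<le> Amax" using co[OF True True2] Wa[of n] by linarith
        then have "dist (y n) x0 \<le> Amax / \<kappa>" using k by (simp add: field_simps)
        then show ?thesis unfolding B_def by linarith
      next
        case False
        then show ?thesis unfolding B_def by linarith
      qed
    next
      case False
      then have "dist (y n) x0 \<le> (\<Sum>n<N. dist (y n) x0)"
        by (intro member_le_sum) auto
      then show ?thesis unfolding B_def by linarith
    qed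
  qed
qed

lemma vf_le_Lf:
  assumes "\<And>n. \<bar>dist (y n) z - t\<bar> \<le> b"
  shows "vf y k z \<le> Lf y z"
proof (rule LIMSEQ_le_const[OF vf_lim[of y z t b, OF assms]])
  have "incseq (\<lambda>k. vf y k z)" by (rule incseq_SucI) (rule vf_mono)
  then show "\<exists>N. \<forall>n\<ge>N. vf y k z \<le> vf y n z" by (auto simp: incseq_def)
qed

lemma wliminf:
  assumes wc: "weak_conv c" and cy: "c y x" and cl: "\<And>n. \<bar>dist (y n) z - t\<bar> \<le> b"
  shows "dist x z \<le> Lf y z"
proof (rule field_le_epsilon)
  fix e :: real assume e: "0 < e"
  have "ereal (dist x z) \<le> liminf (\<lambda>n. ereal (dist (y n) z))"
    using wc cy unfolding weak_conv_def by blast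
  then have "\<forall>r < ereal (dist x z). eventually (\<lambda>n. r < ereal (dist (y n) z)) sequentially"
    by (simp add: le_Liminf_iff)
  moreover have "ereal (dist x z - e) < ereal (dist x z)" using e by simp
  ultimately have "eventually (\<lambda>n. ereal (dist x z - e) < ereal (dist (y n) z)) sequentially"
    by blast
  then obtain N where N: "\<And>n. N \<le> n \<Longrightarrow> dist x z - e < dist (y n) z"
    unfolding eventually_sequentially by auto
  have "dist x z - e \<le> vf y N z" by (rule vf_ge) (use N in \<open>auto intro: less_imp_le\<close>)
  also have "\<dots> \<le> Lf y z" by (rule vf_le_Lf[OF cl])
  finally show "dist x z \<le> Lf y z + e" by simp
qed

lemma liminf_Lf:
  assumes cl: "\<And>n. \<bar>dist (y n) z - t\<bar> \<le> b"
  shows "liminf (\<lambda>n. ereal (dist (y n) z)) = ereal (Lf y z)"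
proof -
  have lo: "t - b \<le> dist (y n) z" "dist (y n) z \<le> t + b" for n using cl[of n] by (auto simp: abs_le_iff)
  have I: "ereal (vf y k z) = (INF n\<in>{k..}. ereal (dist (y n) z))" for k
    unfolding vf_def
  proof (rule ereal_INF)
    have "ereal (t - b) \<le> (INF n\<in>{k..}. ereal (dist (y n) z))"
      by (rule INF_greatest) (use lo in auto)
    moreover have "(INF n\<in>{k..}. ereal (dist (y n) z)) \<le> ereal (dist (y k) z)"
      by (rule INF_lower) simp
    ultimately show "\<bar>INF n\<in>{k..}. ereal (dist (y n) z)\<bar> \<noteq> \<infinity>" by auto
  qed
  have vc: "vf y k z \<le> t + b" for k using vf_close[of y z t b k, OF cl] by (simp add: abs_le_iff)
  have S: "ereal (Lf y z) = (SUP k. ereal (vf y k z))"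
    unfolding Lf_def
  proof (rule ereal_SUP)
    have "(SUP k. ereal (vf y k z)) \<le> ereal (t + b)"
      by (rule SUP_least) (simp add: vc)
    moreover have "ereal (vf y 0 z) \<le> (SUP k. ereal (vf y k z))"
      by (rule SUP_upper) simp
    ultimately show "\<bar>SUP k. ereal (vf y k z)\<bar> \<noteq> \<infinity>" by auto
  qed
  show ?thesis by (simp add: liminf_SUP_INF I S)
qed

lemma conv_tw_subseq:
  assumes "conv_tw q \<mu>s \<mu>" "strict_mono r"
  shows "conv_tw q (\<mu>s \<circ> r) \<mu>"
  unfolding conv_tw_def
proof (intro conjI allI impI)
  fix f :: "'a \<Rightarrow> real" assume "continuous_on UNIV f \<and> bounded (range f)"
  then have "(\<lambda>n. integral\<^sup>L (\<mu>s n) f) \<longlonglongrightarrow> integral\<^sup>L \<mu> f" using assms(1) unfolding conv_tw_def by blast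
  from LIMSEQ_subseq_LIMSEQ[OF this assms(2)]
  show "(\<lambda>n. integral\<^sup>L ((\<mu>s \<circ> r) n) f) \<longlonglongrightarrow> integral\<^sup>L \<mu> f" by (simp add: o_def)
next
  fix x
  have "(\<lambda>n. integral\<^sup>L (\<mu>s n) (\<lambda>y. dpow (dist x y) q)) \<longlonglongrightarrow> integral\<^sup>L \<mu> (\<lambda>y. dpow (dist x y) q)"
    using assms(1) unfolding conv_tw_def by blast
  from LIMSEQ_subseq_LIMSEQ[OF this assms(2)]
  show "(\<lambda>n. integral\<^sup>L ((\<mu>s \<circ> r) n) (\<lambda>y. dpow (dist x y) q)) \<longlonglongrightarrow> integral\<^sup>L \<mu> (\<lambda>y. dpow (dist x y) q)"
    by (simp add: o_def)
qed

lemma main_seq: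
  fixes \<mu>s :: "nat \<Rightarrow> 'a::metric_space measure" and c :: "(nat \<Rightarrow> 'a) \<Rightarrow> 'a \<Rightarrow> bool"
  assumes p: "1 \<le> p" and wc: "weak_conv c" and conv: "conv_tw (p - 1) \<mu>s \<mu>"
    and Pn: "\<And>n. \<mu>s n \<in> Pr (p - 1)" and P: "\<mu> \<in> Pr (p - 1)"
    and yM: "\<And>n. y n \<in> Mp p (\<mu>s n)"
  shows "\<exists>r x. strict_mono r \<and> x \<in> Mp p \<mu> \<and> (\<lambda>n. dist (y (r n)) x) \<longlonglongrightarrow> 0"
proof -
  define x0 where "x0 = y 0"
  have pp: "p \<noteq> 0" "0 < p" using p by auto
  have W0: "Wp p (\<mu>s n) (y n) x' \<le> 0" for n x' using yM[of n] by (simp add: Mp_def)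
  obtain B where B: "\<And>n. dist (y n) x0 \<le> B"
    using bounded_seq[OF p conv Pn P W0] by blast
  have W1: "\<forall>s. (\<exists>y B. \<forall>n. dist (s n) y \<le> B) \<longrightarrow> (\<exists>(r::nat \<Rightarrow> nat) x. strict_mono r \<and> c (s \<circ> r) x)"
    using wc by (simp add: weak_conv_def)
  have "\<exists>y0 B. \<forall>n. dist (y n) y0 \<le> B" using B by blast
  then have "\<exists>r x. strict_mono r \<and> c (y \<circ> r) x" using W1 by blast
  then obtain r x where r: "strict_mono r" and cyr: "c (y \<circ> r) x" by blast
  define y' where "y' = y \<circ> r"
  define \<mu>s' where "\<mu>s' = \<mu>s \<circ> r"
  have conv': "conv_tw (p - 1) \<mu>s' \<mu>" unfolding \<mu>s'_def by (rule conv_tw_subseq[OF conv r])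
  have Pn': "\<mu>s' n \<in> Pr (p - 1)" for n by (simp add: \<mu>s'_def Pn)
  have W0': "Wp p (\<mu>s' n) (y' n) x' \<le> 0" for n x' by (simp add: \<mu>s'_def y'_def W0)
  have yb': "dist (y' n) x' \<le> B + dist x0 x'" for n x'
    using B[of "r n"] dist_triangle[of "y (r n)" x' x0] by (simp add: y'_def)
  have cl: "\<bar>dist (y' n) z - dist x' z\<bar> \<le> B + dist x0 x'" for n z x'
    using dist_diff3[of "y' n" z x'] yb'[of n x'] by linarith
  have cy': "c y' x" using cyr by (simp add: y'_def)
  have low: "dist x z \<le> Lf y' z" for z by (rule wliminf[OF wc cy' cl[of _ z x0]])
  have Lnn: "0 \<le> Lf y' z" for z by (rule Lf_close(2)[OF cl[of _ z x0]])
  have fat: "integrable \<mu> (\<lambda>z. dpow (Lf y' z) p - dpow (dist x' z) p)"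
    "integral\<^sup>L \<mu> (\<lambda>z. dpow (Lf y' z) p - dpow (dist x' z) p) \<le> 0" for x'
    using fatou[OF p conv' Pn' P yb'[of _ x'] W0'[of _ x'] tendsto_const] by simp_all
  have xM: "x \<in> Mp p \<mu>"
    unfolding Mp_def
  proof (intro CollectI allI)
    fix x'
    have "Wp p \<mu> x x' \<le> integral\<^sup>L \<mu> (\<lambda>z. dpow (Lf y' z) p - dpow (dist x' z) p)"
      unfolding Wp_def
    proof (rule integral_mono[OF Wp_int[OF p P] fat(1)])
      fix z show "dpow (dist x z) p - dpow (dist x' z) p \<le> dpow (Lf y' z) p - dpow (dist x' z) p"
        using dpow_mono[OF zero_le_dist low[of z], of p] p by simp
    qed
    then show "Wp p \<mu> x x' \<le> 0" using fat(2)[of x'] by linarith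
  qed
  define h where "h z = dpow (Lf y' z) p - dpow (dist x z) p" for z
  have hnn: "0 \<le> h z" for z using dpow_mono[OF zero_le_dist low[of z], of p] p by (simp add: h_def)
  have hi: "integrable \<mu> h" using fat(1)[of x] by (simp add: h_def[abs_def])
  have "integral\<^sup>L \<mu> h \<le> 0" using fat(2)[of x] by (simp add: h_def[abs_def])
  moreover have "0 \<le> integral\<^sup>L \<mu> h" by (rule integral_nonneg_AE) (simp add: hnn)
  ultimately have "integral\<^sup>L \<mu> h = 0" by simp
  then have "AE z in \<mu>. h z = 0" using integral_nonneg_eq_0_iff_AE[OF hi] hnn by simp
  then have AEL: "AE z in \<mu>. Lf y' z = dist x z"
  proof (rule AE_mp, intro AE_I2 impI)
    fix z assume h0: "h z = 0"
    show "Lf y' z = dist x z"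
    proof (rule ccontr)
      assume "Lf y' z \<noteq> dist x z"
      then have "dist x z < Lf y' z" using low[of z] by simp
      then have "dist x z powr p < Lf y' z powr p" by (intro powr_less_mono2) (use pp in auto)
      then show False using h0 pp by (simp add: h_def dpow_def)
    qed
  qed
  have ps: "prob_space \<mu>" using P by (simp add: Pr_def borel_prob_def)
  obtain z where zL: "Lf y' z = dist x z"
  proof (rule ccontr)
    assume "\<not> thesis"
    then have "\<forall>z. Lf y' z \<noteq> dist x z" using that by blast
    then have "AE z in \<mu>. False" using AEL by (rule_tac AE_mp) auto
    then show False using prob_space.AE_False[OF ps] by simp
  qed
  have "liminf (\<lambda>n. ereal (dist (y' n) z)) = ereal (dist x z)"
    using liminf_Lf[OF cl[of _ z x0]] zL by simp
  moreover obtain r2 :: "nat \<Rightarrow> nat" where r2: "strict_mono r2"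
    and l2: "((\<lambda>n. ereal (dist (y' n) z)) \<circ> r2) \<longlonglongrightarrow> liminf (\<lambda>n. ereal (dist (y' n) z))"
    using liminf_subseq_lim by blast
  ultimately have "(\<lambda>n. dist ((y' \<circ> r2) n) z) \<longlonglongrightarrow> dist x z"
    by (simp add: o_def)
  moreover have "c (y' \<circ> r2) x"
  proof -
    have "\<forall>s x (r::nat \<Rightarrow> nat). c s x \<and> strict_mono r \<longrightarrow> c (s \<circ> r) x"
      using wc by (simp add: weak_conv_def is_convergence_def)
    then show ?thesis using cy' r2 by blast
  qed
  moreover have "\<forall>s x y. c s x \<and> ((\<lambda>n. dist (s n) y) \<longlonglongrightarrow> dist x y) \<longrightarrow> ((\<lambda>n. dist (s n) x) \<longlonglongrightarrow> 0)"
    using wc by (simp add: weak_conv_def)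
  ultimately have "(\<lambda>n. dist ((y' \<circ> r2) n) x) \<longlonglongrightarrow> 0"
    by blast
  then have "(\<lambda>n. dist (y ((r \<circ> r2) n)) x) \<longlonglongrightarrow> 0" by (simp add: y'_def o_def)
  moreover have "strict_mono (r \<circ> r2)" using r r2 by (rule strict_mono_o)
  ultimately show ?thesis using xM by blast
qed

lemma conv_const: "conv_tw q (\<lambda>n. \<nu>) \<nu>"
  by (simp add: conv_tw_def)

lemma exists_min:
  fixes \<nu> :: "'a::metric_space measure" and c :: "(nat \<Rightarrow> 'a) \<Rightarrow> 'a \<Rightarrow> bool"
  assumes p: "1 \<le> p" and wc: "weak_conv c" and P: "\<nu> \<in> Pr (p - 1)"
  shows "Mp p \<nu> \<noteq> {}"
proof -
  define x0 :: 'a where "x0 = undefined"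
  have q0: "0 \<le> p - 1" using p by simp
  note conv = conv_const[of "p - 1" \<nu>]
  have Pn: "\<And>n::nat. (\<lambda>n. \<nu>) n \<in> Pr (p - 1)" using P by simp
  define F where "F y = Wp p \<nu> y x0" for y
  obtain R0 \<kappa> and N :: nat where k: "0 < \<kappa>"
    and co0: "\<forall>n\<ge>N. \<forall>y. R0 \<le> dist y x0 \<longrightarrow> \<kappa> * dist y x0 \<le> Wp p ((\<lambda>n. \<nu>) n) y x0"
    using coercive[where \<mu>s = "\<lambda>n. \<nu>", OF p conv Pn P, of x0] by blast
  have co: "R0 \<le> dist y x0 \<Longrightarrow> \<kappa> * dist y x0 \<le> F y" for y using co0[rule_format, OF order_refl[of N], of y] by (simp add: F_def)
  define b where "b = max R0 0"
  define K where "K = Kc p b * integral\<^sup>L \<nu> (\<lambda>z. 1 + dpow (dist x0 z) (p - 1))"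
  have iH: "integrable \<nu> (\<lambda>z. 1 + dpow (dist x0 z) (p - 1))" by (rule Pr_intH[OF P q0])
  have K0: "0 \<le> K"
  proof -
    have "0 \<le> integral\<^sup>L \<nu> (\<lambda>z. 1 + dpow (dist x0 z) (p - 1))"
      by (rule integral_nonneg_AE) (simp add: dpow_nonneg add_nonneg_nonneg)
    then show ?thesis unfolding K_def using Kc_nonneg[OF p, of b] by (simp add: b_def)
  qed
  have lowb: "- K \<le> F y" for y
  proof (cases "R0 \<le> dist y x0")
    case True
    have "0 \<le> \<kappa> * dist y x0" using k by simp
    then show ?thesis using co[OF True] K0 by linarith
  next
    case False
    have gb: "- (dpow (dist y z) p - dpow (dist x0 z) p) \<le> Kc p b * (1 + dpow (dist x0 z) (p - 1))" for z
    proof -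
      have "\<bar>dist y z - dist x0 z\<bar> \<le> b" using dist_diff3[of y z x0] False by (simp add: b_def)
      from gen_bound[OF p zero_le_dist zero_le_dist this] show ?thesis by (simp add: abs_le_iff)
    qed
    define g where "g z = dpow (dist y z) p - dpow (dist x0 z) p" for z
    define H where "H z = 1 + dpow (dist x0 z) (p - 1)" for z
    have gi: "integrable \<nu> g" unfolding g_def using Wp_int[OF p P] .
    have Hi: "integrable \<nu> H" unfolding H_def using iH .
    have "integral\<^sup>L \<nu> (\<lambda>z. - g z) \<le> integral\<^sup>L \<nu> (\<lambda>z. Kc p b * H z)"
    proof (rule integral_mono)
      show "integrable \<nu> (\<lambda>z. - g z)" using gi by simp
      show "integrable \<nu> (\<lambda>z. Kc p b * H z)" using Hi by simp
      fix z show "- g z \<le> Kc p b * H z" using gb[of z] by (simp only: g_def H_def)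
    qed
    moreover have "integral\<^sup>L \<nu> (\<lambda>z. - g z) = - integral\<^sup>L \<nu> g" by simp
    moreover have "integral\<^sup>L \<nu> (\<lambda>z. Kc p b * H z) = Kc p b * integral\<^sup>L \<nu> H" by simp
    ultimately have "- K \<le> integral\<^sup>L \<nu> g" unfolding K_def H_def[abs_def] by linarith
    then show ?thesis by (simp add: F_def Wp_def g_def[abs_def])
  qed
  have bdd: "bdd_below (range F)" by (rule bdd_belowI[of _ "- K"]) (use lowb in auto)
  define S where "S = Inf (range F)"
  have ex: "\<exists>y. F y < S + inverse (real (Suc n))" for n
  proof -
    have "Inf (range F) < S + inverse (real (Suc n))" by (simp add: S_def)
    then have "\<exists>w\<in>range F. w < S + inverse (real (Suc n))"
      using cInf_less_iff[of "range F", OF _ bdd] by blast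
    then show ?thesis by blast
  qed
  then have "\<forall>n. \<exists>y. F y < S + inverse (real (Suc n))" by blast
  from choice[OF this] obtain y where y0: "\<forall>n. F (y n) < S + inverse (real (Suc n))" by (elim exE)
  then have y: "\<And>n. F (y n) < S + inverse (real (Suc n))" by blast
  define a where "a n = S + inverse (real (Suc n))" for n
  have al: "a \<longlonglongrightarrow> S" unfolding a_def using tendsto_add[OF tendsto_const LIMSEQ_inverse_real_of_nat, of S] by simp
  have Wa: "Wp p ((\<lambda>n. \<nu>) n) (y n) x0 \<le> S + 1" for n
  proof -
    have "inverse (real (Suc n)) \<le> 1" by (simp add: inverse_le_1_iff)
    moreover have "Wp p ((\<lambda>n. \<nu>) n) (y n) x0 = F (y n)" by (simp add: F_def)
    ultimately show ?thesis using y[of n] by linarith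
  qed
  obtain B where B: "\<And>n. dist (y n) x0 \<le> B" using bounded_seq[where \<mu>s = "\<lambda>n. \<nu>" and y = y, OF p conv Pn P Wa] by blast
  have W1: "\<forall>s. (\<exists>y B. \<forall>n. dist (s n) y \<le> B) \<longrightarrow> (\<exists>(r::nat \<Rightarrow> nat) x. strict_mono r \<and> c (s \<circ> r) x)"
    using wc by (simp add: weak_conv_def)
  have "\<exists>y0 B. \<forall>n. dist (y n) y0 \<le> B" using B by blast
  then obtain r x where r: "strict_mono r" and cyr: "c (y \<circ> r) x" using W1 by blast
  have ybr: "dist ((y \<circ> r) n) x0 \<le> B" for n using B by simp
  have War: "Wp p ((\<lambda>n. \<nu>) n) ((y \<circ> r) n) x0 \<le> (a \<circ> r) n" for n
  proof -
    have "Wp p ((\<lambda>n. \<nu>) n) ((y \<circ> r) n) x0 = F (y (r n))" by (simp add: F_def)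
    moreover have "(a \<circ> r) n = S + inverse (real (Suc (r n)))" by (simp add: a_def)
    ultimately show ?thesis using y[of "r n"] by linarith
  qed
  have alr: "(a \<circ> r) \<longlonglongrightarrow> S" by (rule LIMSEQ_subseq_LIMSEQ[OF al r])
  note fat = fatou[where \<mu>s = "\<lambda>n. \<nu>" and y = "y \<circ> r", OF p conv Pn P ybr War alr]
  have cl: "\<bar>dist ((y \<circ> r) n) z - dist x0 z\<bar> \<le> B" for n z
    using dist_diff3[of "(y \<circ> r) n" z x0] ybr[of n] by linarith
  have low: "dist x z \<le> Lf (y \<circ> r) z" for z by (rule wliminf[OF wc cyr cl])
  have "F x \<le> integral\<^sup>L \<nu> (\<lambda>z. dpow (Lf (y \<circ> r) z) p - dpow (dist x0 z) p)"
    unfolding F_def Wp_def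
  proof (rule integral_mono[OF Wp_int[OF p P] fat(1)])
    fix z show "dpow (dist x z) p - dpow (dist x0 z) p \<le> dpow (Lf (y \<circ> r) z) p - dpow (dist x0 z) p"
      using dpow_mono[OF zero_le_dist low[of z], of p] p by simp
  qed
  then have FS: "F x \<le> S" using fat(2) by linarith
  have "x \<in> Mp p \<nu>"
    unfolding Mp_def
  proof (intro CollectI allI)
    fix x'
    have "S \<le> F x'" unfolding S_def by (rule cInf_lower[OF _ bdd]) simp
    then show "Wp p \<nu> x x' \<le> 0" using Wp_split[OF p P, of x x' x0] FS by (simp add: F_def)
  qed
  then show ?thesis by blast
qed

lemma Mp_compact:
  fixes \<nu> :: "'a::metric_space measure" and c :: "(nat \<Rightarrow> 'a) \<Rightarrow> 'a \<Rightarrow> bool"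
  assumes p: "1 \<le> p" and wc: "weak_conv c" and P: "\<nu> \<in> Pr (p - 1)"
  shows "compact (Mp p \<nu>)"
  unfolding compact_eq_seq_compact_metric
proof (rule seq_compactI)
  fix f :: "nat \<Rightarrow> 'a" assume f: "\<forall>n. f n \<in> Mp p \<nu>"
  have Pn: "\<And>n::nat. (\<lambda>n. \<nu>) n \<in> Pr (p - 1)" using P by simp
  have fM: "\<And>n. f n \<in> Mp p ((\<lambda>n. \<nu>) n)" using f by simp
  note X = main_seq[where y = f and \<mu>s = "\<lambda>n. \<nu>", OF p wc conv_const Pn P fM]
  from X obtain r x where r: "strict_mono r" and xM: "x \<in> Mp p \<nu>" and l: "(\<lambda>n. dist (f (r n)) x) \<longlonglongrightarrow> 0"
    by (elim exE conjE)
  have "(\<lambda>n. dist ((f \<circ> r) n) x) \<longlonglongrightarrow> 0" using l by (simp add: o_def)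
  then have "(f \<circ> r) \<longlonglongrightarrow> x" by (rule tendsto_dist_iff[THEN iffD2])
  then show "\<exists>l\<in>Mp p \<nu>. \<exists>r. strict_mono r \<and> (f \<circ> r) \<longlonglongrightarrow> l" using r xM by blast
qed

lemma sub_crit:
  fixes s :: "nat \<Rightarrow> real"
  assumes "\<And>r::nat\<Rightarrow>nat. strict_mono r \<Longrightarrow> \<exists>r'::nat\<Rightarrow>nat. strict_mono r' \<and> (\<lambda>n. s (r (r' n))) \<longlonglongrightarrow> 0"
  shows "s \<longlonglongrightarrow> 0"
proof (rule ccontr)
  assume "\<not> s \<longlonglongrightarrow> 0"
  then obtain e :: real where e: "0 < e" and fr: "\<forall>N. \<exists>n\<ge>N. \<not> norm (s n - 0) < e"
    unfolding LIMSEQ_iff by blast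
  define S where "S = {n. e \<le> \<bar>s n\<bar>}"
  have "infinite S" unfolding infinite_nat_iff_unbounded_le
  proof
    fix m
    obtain n where "n \<ge> m" "\<not> norm (s n - 0) < e" using fr by blast
    then show "\<exists>n\<ge>m. n \<in> S" by (auto simp: S_def)
  qed
  then obtain r :: "nat \<Rightarrow> nat" where r: "strict_mono r" "\<And>n. r n \<in> S"
    using infinite_enumerate by blast
  obtain r' where "strict_mono r'" and l: "(\<lambda>n. s (r (r' n))) \<longlonglongrightarrow> 0" using assms[OF r(1)] by blast
  from LIMSEQ_D[OF l e] obtain N where "\<And>n. N \<le> n \<Longrightarrow> norm (s (r (r' n)) - 0) < e" by blast
  then have "\<bar>s (r (r' N))\<bar> < e" by simp
  moreover have "e \<le> \<bar>s (r (r' N))\<bar>" using r(2)[of "r' N"] by (simp add: S_def)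
  ultimately show False by simp
qed

theorem corollary3p11:
  fixes \<mu>s :: "nat \<Rightarrow> 'a::metric_space measure" and \<mu> :: "'a measure" and p :: real
  assumes "separable_metric TYPE('a)"
    and "admits_weak_convergence TYPE('a)"
    and "p \<ge> 1"
    and "\<forall>n. \<mu>s n \<in> Pr (p - 1)" and "\<mu> \<in> Pr (p - 1)"
    and "conv_tw (p - 1) \<mu>s \<mu>"
  shows "(\<forall>n. (\<forall>y\<in>Mp p (\<mu>s n). \<exists>x\<in>Mp p \<mu>. \<forall>x'\<in>Mp p \<mu>. dist y x \<le> dist y x') \<and>
              (\<exists>z\<in>Mp p (\<mu>s n). \<forall>y\<in>Mp p (\<mu>s n).
                 (INF x\<in>Mp p \<mu>. dist y x) \<le> (INF x\<in>Mp p \<mu>. dist z x)))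
         \<and> (\<lambda>n. SUP y\<in>Mp p (\<mu>s n). INF x\<in>Mp p \<mu>. dist y x) \<longlonglongrightarrow> 0"
proof -
  obtain c :: "(nat \<Rightarrow> 'a) \<Rightarrow> 'a \<Rightarrow> bool" where wc: "weak_conv c"
    using assms(2) by (auto simp: admits_weak_convergence_def)
  have p: "1 \<le> p" using assms(3) by simp
  have Pn: "\<And>n. \<mu>s n \<in> Pr (p - 1)" using assms(4) by simp
  have P: "\<mu> \<in> Pr (p - 1)" by (rule assms(5))
  have conv: "conv_tw (p - 1) \<mu>s \<mu>" by (rule assms(6))
  define K where "K = Mp p \<mu>"
  have Kc: "compact K" unfolding K_def by (rule Mp_compact[OF p wc P])
  have Kne: "K \<noteq> {}" unfolding K_def by (rule exists_min[OF p wc P])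
  have Knc: "compact (Mp p (\<mu>s n))" for n by (rule Mp_compact[OF p wc Pn])
  have Knne: "Mp p (\<mu>s n) \<noteq> {}" for n by (rule exists_min[OF p wc Pn])
  define hd where "hd y = (INF x\<in>K. dist y x)" for y
  have hd_inf: "hd y = infdist y K" for y by (simp add: hd_def infdist_notempty[OF Kne])
  have hdc: "continuous_on UNIV hd"
    unfolding hd_inf[abs_def] by (intro continuous_on_infdist continuous_on_id)
  have part1a: "\<exists>x\<in>K. \<forall>x'\<in>K. dist y x \<le> dist y x'" for y
    by (rule continuous_attains_inf[OF Kc Kne]) (intro continuous_intros)
  have part1b: "\<exists>z\<in>Mp p (\<mu>s n). \<forall>y\<in>Mp p (\<mu>s n). hd y \<le> hd z" for n
    by (rule continuous_attains_sup[OF Knc Knne]) (rule continuous_on_subset[OF hdc], simp)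
  then have "\<forall>n. \<exists>z. z \<in> Mp p (\<mu>s n) \<and> (\<forall>y\<in>Mp p (\<mu>s n). hd y \<le> hd z)" by blast
  from choice[OF this] obtain z where z: "\<forall>n. z n \<in> Mp p (\<mu>s n) \<and> (\<forall>y\<in>Mp p (\<mu>s n). hd y \<le> hd (z n))"
    by (elim exE)
  have SUPeq: "(SUP y\<in>Mp p (\<mu>s n). hd y) = hd (z n)" for n
    by (rule cSup_eq_maximum) (use z in auto)
  have lim: "(\<lambda>n. hd (z n)) \<longlonglongrightarrow> 0"
  proof (rule sub_crit)
    fix r :: "nat \<Rightarrow> nat" assume r: "strict_mono r"
    have conv': "conv_tw (p - 1) (\<mu>s \<circ> r) \<mu>" by (rule conv_tw_subseq[OF conv r])
    have Pn': "\<And>n. (\<mu>s \<circ> r) n \<in> Pr (p - 1)" by (simp add: Pn)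
    have zM: "\<And>n. (z \<circ> r) n \<in> Mp p ((\<mu>s \<circ> r) n)" using z by simp
    note X = main_seq[where \<mu>s = "\<mu>s \<circ> r" and y = "z \<circ> r", OF p wc conv' Pn' P zM]
    from X obtain r' x where r': "strict_mono r'" and xM: "x \<in> Mp p \<mu>"
      and l: "(\<lambda>n. dist ((z \<circ> r) (r' n)) x) \<longlonglongrightarrow> 0"
      by (elim exE conjE)
    have "(\<lambda>n. hd (z (r (r' n)))) \<longlonglongrightarrow> 0"
    proof (rule tendsto_sandwich[OF _ _ tendsto_const l])
      show "eventually (\<lambda>n. 0 \<le> hd (z (r (r' n)))) sequentially"
        by (simp add: hd_inf infdist_nonneg)
      show "eventually (\<lambda>n. hd (z (r (r' n))) \<le> dist ((z \<circ> r) (r' n)) x) sequentially"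
        using xM by (simp add: hd_inf infdist_le K_def)
    qed
    then show "\<exists>r'. strict_mono r' \<and> (\<lambda>n. hd (z (r (r' n)))) \<longlonglongrightarrow> 0" using r' by blast
  qed
  show ?thesis
  proof (intro conjI allI ballI)
    fix n y assume "y \<in> Mp p (\<mu>s n)"
    show "\<exists>x\<in>Mp p \<mu>. \<forall>x'\<in>Mp p \<mu>. dist y x \<le> dist y x'" using part1a[of y] by (simp add: K_def)
  next
    fix n
    show "\<exists>z\<in>Mp p (\<mu>s n). \<forall>y\<in>Mp p (\<mu>s n). (INF x\<in>Mp p \<mu>. dist y x) \<le> (INF x\<in>Mp p \<mu>. dist z x)"
      using part1b[of n] by (simp add: hd_def K_def)
  next
    show "(\<lambda>n. SUP y\<in>Mp p (\<mu>s n). INF x\<in>Mp p \<mu>. dist y x) \<longlonglongrightarrow> 0"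
      using lim SUPeq by (simp add: hd_def K_def)
  qed
qed

end
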